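(* For every integer $m\ge1$ and every partition $\mu\vdash m$ with $\ell(\mu)$ parts, there is a polynomial $\Pi_\mu(q)$ with nonnegative integer coefficients such that $$f_\mu\Big[\frac{1}{1-q}\Big]\,(q;q)_m\;=\;\Pi_\mu(q)\,(q-1)^{m-\ell(\mu)}.$$
   Context: $f_\mu$ denotes the forgotten symmetric function indexed by $\mu$, i.e. the basis dual to the elementary basis $\{e_\mu\}$ under the Hall scalar product (equivalently $f_\mu=\omega m_\mu$). $f_\mu[1/(1-q)]$ denotes the plethystic evaluation of $f_\mu$ at the alphabet $\{1,q,q^2,\dots\}$, i.e. $f_\mu(1,q,q^2,\ldots)$, a rational function of $q$. $(q;q)_m=(1-q)(1-q^2)\cdots(1-q^m)$. *)

theory Defs
  imports "HOL-Analysis.Analysis" "HOL-Library.Multiset" "HOL-Computational_Algebra.Polynomial"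
begin

definition partitions :: "nat \<Rightarrow> nat list set" where
  "partitions n = {xs. sorted (rev xs) \<and> 0 \<notin> set xs \<and> sum_list xs = n}"

text \<open>Monomial symmetric function m_nu evaluated at the (infinite) alphabet x_0, x_1, ...:
  sum of x^alpha over all finitely supported exponent vectors alpha whose multiset of
  nonzero entries equals nu.\<close>
definition msym :: "nat list \<Rightarrow> (nat \<Rightarrow> real) \<Rightarrow> real" where
  "msym nu x = infsum (\<lambda>\<alpha>. \<Prod>i\<in>{i. \<alpha> i \<noteq> 0}. x i ^ \<alpha> i)
      {\<alpha> :: nat \<Rightarrow> nat. finite {i. \<alpha> i \<noteq> 0} \<and>
          image_mset \<alpha> (mset_set {i. \<alpha> i \<noteq> 0}) = mset nu}"

definition hsym :: "nat \<Rightarrow> (nat \<Rightarrow> real) \<Rightarrow> real" where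
  "hsym k x = (\<Sum>nu\<in>partitions k. msym nu x)"

definition hprod :: "nat list \<Rightarrow> (nat \<Rightarrow> real) \<Rightarrow> real" where
  "hprod lam x = (\<Prod>k\<leftarrow>lam. hsym k x)"

text \<open>M(lam,nu) = number of 0-1 matrices with row sums lam and column sums nu,
  i.e. the coefficient of m_nu in e_lam: e_lam = sum_nu M(lam,nu) m_nu.\<close>
definition emcoeff :: "nat list \<Rightarrow> nat list \<Rightarrow> nat" where
  "emcoeff lam nu = card {A. A \<subseteq> {0..<length lam} \<times> {0..<length nu} \<and>
      (\<forall>i<length lam. card {j. (i,j) \<in> A} = lam ! i) \<and>
      (\<forall>j<length nu. card {i. (i,j) \<in> A} = nu ! j)}"

text \<open>The inverse matrix (indexed by partitions of n): m_mu = sum_lam Minv(mu,lam) e_lam.\<close>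
definition me_coeff :: "nat \<Rightarrow> nat list \<Rightarrow> nat list \<Rightarrow> real" where
  "me_coeff n = (THE G. (\<forall>lam nu. (lam \<notin> partitions n \<or> nu \<notin> partitions n) \<longrightarrow> G lam nu = 0) \<and>
      (\<forall>lam\<in>partitions n. \<forall>ka\<in>partitions n.
         (\<Sum>nu\<in>partitions n. G lam nu * real (emcoeff nu ka)) = (if lam = ka then 1 else 0)))"

text \<open>Forgotten symmetric function f_mu = omega m_mu = sum_lam Minv(mu,lam) h_lam
  (omega e_lam = h_lam), evaluated at the alphabet x.\<close>
definition forgotten :: "nat list \<Rightarrow> (nat \<Rightarrow> real) \<Rightarrow> real" where
  "forgotten mu x = (\<Sum>lam\<in>partitions (sum_list mu). me_coeff (sum_list mu) mu lam * hprod lam x)"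

definition qpoch :: "real \<Rightarrow> nat \<Rightarrow> real" where
  "qpoch q m = (\<Prod>i=1..m. 1 - q ^ i)"

end

theory Submission
  imports Defs "HOL-Combinatorics.Multiset_Permutations" "HOL-Library.List_Lexorder"
begin


definition tot :: "(nat \<Rightarrow> nat) \<Rightarrow> nat" where
  "tot \<alpha> = sum \<alpha> {i. \<alpha> i \<noteq> 0}"
definition exq :: "(nat \<Rightarrow> nat) \<Rightarrow> nat" where
  "exq \<alpha> = (\<Sum>i\<in>{i. \<alpha> i \<noteq> 0}. i * \<alpha> i)"
definition DD :: "nat \<Rightarrow> (nat \<Rightarrow> nat) set" where
  "DD k = {\<alpha>. finite {i. \<alpha> i \<noteq> 0} \<and> tot \<alpha> = k}"
definition wt :: "real \<Rightarrow> (nat \<Rightarrow> nat) \<Rightarrow> real" where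
  "wt q \<alpha> = (\<Prod>i\<in>{i. \<alpha> i \<noteq> 0}. (q ^ i) ^ \<alpha> i)"
definition sh :: "(nat \<Rightarrow> nat) \<Rightarrow> (nat \<Rightarrow> nat)" where
  "sh \<alpha> = (\<lambda>i. \<alpha> (Suc i))"
definition cns :: "nat \<Rightarrow> (nat \<Rightarrow> nat) \<Rightarrow> (nat \<Rightarrow> nat)" where
  "cns j \<alpha> = (\<lambda>i. if i = 0 then j else \<alpha> (i - 1))"

lemma wt_eq: "wt q \<alpha> = q ^ exq \<alpha>"
  unfolding wt_def exq_def by (simp add: power_mult power_sum)

lemma tot_sup: assumes "finite B" "{i. \<alpha> i \<noteq> 0} \<subseteq> B" shows "tot \<alpha> = sum \<alpha> B"
  unfolding tot_def using assms by (intro sum.mono_neutral_left) auto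

lemma exq_sup: assumes "finite B" "{i. \<alpha> i \<noteq> 0} \<subseteq> B" shows "exq \<alpha> = (\<Sum>i\<in>B. i * \<alpha> i)"
  unfolding exq_def using assms by (intro sum.mono_neutral_left) auto

lemma finite_supp_bound: fixes \<alpha> :: "nat \<Rightarrow> nat" assumes "finite {i. \<alpha> i \<noteq> 0}" obtains N where "{i. \<alpha> i \<noteq> 0} \<subseteq> {..<N}"
proof -
  obtain N where "{i. \<alpha> i \<noteq> 0} \<subseteq> {..<N}" using finite_nat_bounded[OF assms] by (elim exE)
  then show ?thesis by (rule that)
qed

lemma sh_supp: "{i. sh \<alpha> i \<noteq> 0} \<subseteq> (\<lambda>i. i - 1) ` {i. \<alpha> i \<noteq> 0}"
proof
  fix i assume "i \<in> {i. sh \<alpha> i \<noteq> 0}"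
  then have "Suc i \<in> {i. \<alpha> i \<noteq> 0}" "i = Suc i - 1" by (auto simp: sh_def)
  then show "i \<in> (\<lambda>i. i - 1) ` {i. \<alpha> i \<noteq> 0}" by blast
qed

lemma sh_finite: "finite {i. \<alpha> i \<noteq> 0} \<Longrightarrow> finite {i. sh \<alpha> i \<noteq> 0}"
  using sh_supp finite_subset by blast

lemma sh_bound: "{i. \<alpha> i \<noteq> 0} \<subseteq> {..<Suc n} \<Longrightarrow> {i. sh \<alpha> i \<noteq> 0} \<subseteq> {..<n}"
  by (auto simp: sh_def)

lemma tot_sh: assumes "finite {i. \<alpha> i \<noteq> 0}"
  shows "tot \<alpha> = \<alpha> 0 + tot (sh \<alpha>)" "exq \<alpha> = tot (sh \<alpha>) + exq (sh \<alpha>)"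
proof -
  obtain N where N: "{i. \<alpha> i \<noteq> 0} \<subseteq> {..<Suc N}"
    using assms finite_supp_bound by (metis lessThan_Suc subset_insertI2)
  have N2: "{i. sh \<alpha> i \<noteq> 0} \<subseteq> {..<N}" using sh_bound[OF N] .
  have "tot \<alpha> = (\<Sum>i<Suc N. \<alpha> i)" by (rule tot_sup[OF _ N]) auto
  also have "\<dots> = \<alpha> 0 + (\<Sum>i<N. sh \<alpha> i)" by (subst sum.lessThan_Suc_shift) (simp add: sh_def)
  also have "(\<Sum>i<N. sh \<alpha> i) = tot (sh \<alpha>)" by (rule tot_sup[OF _ N2, symmetric]) auto
  finally show "tot \<alpha> = \<alpha> 0 + tot (sh \<alpha>)" .
  have "exq \<alpha> = (\<Sum>i<Suc N. i * \<alpha> i)" by (rule exq_sup[OF _ N]) auto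
  also have "\<dots> = (\<Sum>i<N. sh \<alpha> i) + (\<Sum>i<N. i * sh \<alpha> i)"
    by (subst sum.lessThan_Suc_shift) (simp add: sh_def sum.distrib)
  also have "(\<Sum>i<N. i * sh \<alpha> i) = exq (sh \<alpha>)" by (rule exq_sup[OF _ N2, symmetric]) auto
  finally show "exq \<alpha> = tot (sh \<alpha>) + exq (sh \<alpha>)" using \<open>(\<Sum>i<N. sh \<alpha> i) = tot (sh \<alpha>)\<close> by simp
qed

lemma sh_cns[simp]: "sh (cns j \<beta>) = \<beta>" by (simp add: sh_def cns_def)
lemma cns_sh: "cns (\<alpha> 0) (sh \<alpha>) = \<alpha>" by (auto simp: sh_def cns_def fun_eq_iff not0_implies_Suc)
lemma cns0[simp]: "cns j \<beta> 0 = j" by (simp add: cns_def)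
lemma inj_cns: "inj (cns j)" by (metis injI sh_cns)

lemma cns_finite: assumes "finite {i. \<beta> i \<noteq> 0}" shows "finite {i. cns j \<beta> i \<noteq> 0}"
proof -
  have "{i. cns j \<beta> i \<noteq> 0} \<subseteq> insert 0 (Suc ` {i. \<beta> i \<noteq> 0})"
  proof
    fix i assume i: "i \<in> {i. cns j \<beta> i \<noteq> 0}"
    show "i \<in> insert 0 (Suc ` {i. \<beta> i \<noteq> 0})"
    proof (cases i)
      case 0 then show ?thesis by simp
    next
      case (Suc i') then have "\<beta> i' \<noteq> 0" using i by (simp add: cns_def)
      then show ?thesis using Suc by blast
    qed
  qed
  then show ?thesis using assms finite_subset by blast
qed

lemma qpoch_Suc: "qpoch q (Suc k) = qpoch q k * (1 - q ^ Suc k)"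
  unfolding qpoch_def by simp

lemma qpoch_pos: "0 < q \<Longrightarrow> q < 1 \<Longrightarrow> qpoch q k > 0"
  unfolding qpoch_def by (intro prod_pos) (auto simp: power_less_one_iff)

lemma geo_id: assumes "0 < q" "q < 1" shows "(\<Sum>i\<le>k. q ^ i / qpoch q i) = 1 / qpoch q k"
proof (induction k)
  case 0 then show ?case by (simp add: qpoch_def)
next
  case (Suc k)
  have p: "qpoch q k > 0" "1 - q ^ Suc k > 0" using qpoch_pos assms
    by (auto simp: power_less_one_iff simp del: power_Suc)
  have "(\<Sum>i\<le>Suc k. q ^ i / qpoch q i) = 1 / qpoch q k + q ^ Suc k / (qpoch q k * (1 - q ^ Suc k))"
    using Suc by (simp add: qpoch_Suc del: power_Suc)
  also have "\<dots> = 1 / qpoch q (Suc k)" using p by (simp add: qpoch_Suc field_simps del: power_Suc)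
  finally show ?case .
qed

lemma wt_nonneg: "0 < q \<Longrightarrow> 0 \<le> wt q \<alpha>" by (simp add: wt_eq)

lemma DD_0_le: "\<alpha> \<in> DD k \<Longrightarrow> \<alpha> 0 \<le> k"
  unfolding DD_def using tot_sh by fastforce

lemma wt_sh: "finite {i. \<alpha> i \<noteq> 0} \<Longrightarrow> wt q \<alpha> = q ^ tot (sh \<alpha>) * wt q (sh \<alpha>)"
  by (simp add: wt_eq tot_sh power_add)

lemma wt_cns: "finite {i. \<beta> i \<noteq> 0} \<Longrightarrow> wt q (cns j \<beta>) = q ^ tot \<beta> * wt q \<beta>"
  using wt_sh[OF cns_finite, of \<beta> q j] by simp

lemma finite_bound:
  assumes q: "0 < q" "q < 1"
  shows "finite F \<Longrightarrow> F \<subseteq> DD k \<Longrightarrow> (\<forall>\<alpha>\<in>F. {i. \<alpha> i \<noteq> 0} \<subseteq> {..<n}) \<Longrightarrow> sum (wt q) F \<le> 1 / qpoch q k"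
proof (induction n arbitrary: k F)
  case 0
  have F: "F \<subseteq> {\<lambda>_. 0}"
  proof
    fix \<alpha> assume "\<alpha> \<in> F"
    then have "\<forall>i. \<alpha> i = 0" using "0.prems"(3) by blast
    then show "\<alpha> \<in> {\<lambda>_. 0}" by (simp add: fun_eq_iff)
  qed
  show ?case
  proof (cases "F = {}")
    case True then show ?thesis using qpoch_pos[OF q, of k] by simp
  next
    case False
    then have "F = {\<lambda>_. 0}" using F by auto
    moreover have "k = 0" using \<open>F \<subseteq> DD k\<close> \<open>F = {\<lambda>_. 0}\<close> by (auto simp: DD_def tot_def)
    ultimately show ?thesis by (simp add: wt_def qpoch_def)
  qed
next
  case (Suc n)
  define P where "P i = {\<alpha>\<in>F. tot (sh \<alpha>) = i}" for i
  have tk: "tot (sh \<alpha>) \<le> k" if "\<alpha> \<in> F" for \<alpha>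
    using that Suc.prems(2) tot_sh(1)[of \<alpha>] by (auto simp: DD_def)
  have "sum (wt q) F = (\<Sum>i\<le>k. sum (wt q) (P i))"
    unfolding P_def by (rule sum.group[symmetric]) (use Suc.prems(1) tk in auto)
  also have "\<dots> \<le> (\<Sum>i\<le>k. q ^ i / qpoch q i)"
  proof (rule sum_mono)
    fix i assume "i \<in> {..k}"
    have inj: "inj_on sh (P i)"
    proof (rule inj_onI)
      fix a b assume ab: "a \<in> P i" "b \<in> P i" "sh a = sh b"
      have "a \<in> DD k" "b \<in> DD k" using ab(1,2) Suc.prems(2) by (auto simp: P_def)
      then have "tot a = a 0 + tot (sh a)" "tot b = b 0 + tot (sh b)" "tot a = k" "tot b = k"
        using tot_sh(1) by (auto simp: DD_def)
      then have "a 0 = b 0" using ab(3) by simp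
      then show "a = b" using ab cns_sh by metis
    qed
    have "sum (wt q) (P i) = (\<Sum>\<alpha>\<in>P i. q ^ i * wt q (sh \<alpha>))"
      using Suc.prems(2) by (intro sum.cong) (auto simp: P_def DD_def wt_sh)
    also have "\<dots> = q ^ i * sum (wt q) (sh ` P i)"
      by (simp add: sum_distrib_left sum.reindex[OF inj])
    also have "\<dots> \<le> q ^ i * (1 / qpoch q i)"
    proof (rule mult_left_mono)
      show "sum (wt q) (sh ` P i) \<le> 1 / qpoch q i"
      proof (rule Suc.IH)
        show "finite (sh ` P i)" using Suc.prems(1) by (simp add: P_def)
        show "sh ` P i \<subseteq> DD i"
        proof
          fix \<beta> assume "\<beta> \<in> sh ` P i"
          then obtain \<alpha> where a: "\<alpha> \<in> F" "tot (sh \<alpha>) = i" "\<beta> = sh \<alpha>" by (auto simp: P_def)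
          then have "finite {i. \<alpha> i \<noteq> 0}" using Suc.prems(2) by (auto simp: DD_def)
          then show "\<beta> \<in> DD i" using a sh_finite unfolding DD_def by blast
        qed
        show "\<forall>\<alpha>\<in>sh ` P i. {i. \<alpha> i \<noteq> 0} \<subseteq> {..<n}" using Suc.prems(3) sh_bound by (auto simp: P_def)
      qed
    qed (use q in simp)
    finally show "sum (wt q) (P i) \<le> q ^ i / qpoch q i" by simp
  qed
  also have "\<dots> = 1 / qpoch q k" by (rule geo_id[OF q])
  finally show ?case .
qed

lemma DD_summable: assumes q: "0 < q" "q < 1" shows "wt q summable_on DD k"
proof (rule nonneg_bdd_above_summable_on)
  show "\<And>x. x \<in> DD k \<Longrightarrow> 0 \<le> wt q x" using wt_nonneg q by blast
  show "bdd_above (sum (wt q) ` {F. F \<subseteq> DD k \<and> finite F})"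
  proof (rule bdd_aboveI2)
    fix F assume F: "F \<in> {F. F \<subseteq> DD k \<and> finite F}"
    have "\<forall>\<alpha>\<in>F. finite {i. \<alpha> i \<noteq> 0}" using F by (auto simp: DD_def)
    then have "\<forall>\<alpha>\<in>F. \<exists>N. {i. \<alpha> i \<noteq> 0} \<subseteq> {..<N}" using finite_nat_bounded by blast
    then obtain Nf where Nf: "\<forall>\<alpha>\<in>F. {i. \<alpha> i \<noteq> 0} \<subseteq> {..<Nf \<alpha>}" by metis
    define n where "n = Max (insert 0 (Nf ` F))"
    have "\<forall>\<alpha>\<in>F. {i. \<alpha> i \<noteq> 0} \<subseteq> {..<n}"
    proof
      fix \<alpha> assume "\<alpha> \<in> F"
      then have "Nf \<alpha> \<le> n" using F by (auto simp: n_def)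
      then show "{i. \<alpha> i \<noteq> 0} \<subseteq> {..<n}" using Nf \<open>\<alpha> \<in> F\<close> by fastforce
    qed
    then show "sum (wt q) F \<le> 1 / qpoch q k" using finite_bound[OF q] F by blast
  qed
qed

lemma DD_infsum: assumes q: "0 < q" "q < 1" shows "infsum (wt q) (DD k) = 1 / qpoch q k"
proof (induction k rule: less_induct)
  case (less k)
  show ?case
  proof (cases k)
    case 0
    have "DD 0 = {\<lambda>_. 0}"
    proof
      show "DD 0 \<subseteq> {\<lambda>_. 0}"
      proof
        fix \<alpha> assume "\<alpha> \<in> DD 0"
        then have "finite {i. \<alpha> i \<noteq> 0}" "sum \<alpha> {i. \<alpha> i \<noteq> 0} = 0" by (auto simp: DD_def tot_def)
        then have "\<forall>i. \<alpha> i = 0" using sum_eq_0_iff by blast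
        then show "\<alpha> \<in> {\<lambda>_. 0}" by (simp add: fun_eq_iff)
      qed
      show "{\<lambda>_. 0} \<subseteq> DD 0" by (simp add: DD_def tot_def)
    qed
    then show ?thesis using 0 by (simp add: wt_def qpoch_def)
  next
    case (Suc k')
    define P where "P i = cns (k - i) ` DD i" for i
    have Psub: "P i \<subseteq> DD k" if "i \<le> k" for i
    proof
      fix \<alpha> assume "\<alpha> \<in> P i"
      then obtain \<beta> where b: "\<beta> \<in> DD i" "\<alpha> = cns (k - i) \<beta>" by (auto simp: P_def)
      then have f: "finite {i. \<beta> i \<noteq> 0}" "tot \<beta> = i" by (auto simp: DD_def)
      have f2: "finite {i. \<alpha> i \<noteq> 0}" using b(2) cns_finite[OF f(1)] by simp
      have "tot \<alpha> = \<alpha> 0 + tot (sh \<alpha>)" using tot_sh(1)[OF f2] .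
      then have "tot \<alpha> = k" using b(2) f(2) that by simp
      then show "\<alpha> \<in> DD k" using f2 by (simp add: DD_def)
    qed
    have DDeq: "DD k = (\<Union>i\<in>{..k}. P i)"
    proof
      show "DD k \<subseteq> (\<Union>i\<in>{..k}. P i)"
      proof
        fix \<alpha> assume a: "\<alpha> \<in> DD k"
        then have f: "finite {i. \<alpha> i \<noteq> 0}" and t: "tot \<alpha> = k" by (auto simp: DD_def)
        have "\<alpha> = cns (k - tot (sh \<alpha>)) (sh \<alpha>)" using tot_sh(1)[OF f] t cns_sh by (metis add_diff_cancel_right')
        moreover have "sh \<alpha> \<in> DD (tot (sh \<alpha>))" using f sh_finite by (auto simp: DD_def)
        moreover have "tot (sh \<alpha>) \<le> k" using tot_sh(1)[OF f] t by simp
        ultimately show "\<alpha> \<in> (\<Union>i\<in>{..k}. P i)" unfolding P_def by blast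
      qed
    next
      show "(\<Union>i\<in>{..k}. P i) \<subseteq> DD k" using Psub by blast
    qed
    have disj: "P i \<inter> P j = {}" if "i \<noteq> j" for i j
    proof (rule ccontr)
      assume "P i \<inter> P j \<noteq> {}"
      then obtain \<beta> \<gamma> where "\<beta> \<in> DD i" "\<gamma> \<in> DD j" "cns (k - i) \<beta> = cns (k - j) \<gamma>"
        unfolding P_def by blast
      then have "\<beta> = \<gamma>" "tot \<beta> = i" "tot \<gamma> = j" by (metis sh_cns, auto simp: DD_def)
      then show False using that by simp
    qed
    have summ: "wt q summable_on P i" if "i \<le> k" for i
      using summable_on_subset_banach[OF DD_summable[OF q] Psub[OF that]] .
    have Pval: "infsum (wt q) (P i) = q ^ i * infsum (wt q) (DD i)" for i
    proof -
      have "infsum (wt q) (P i) = infsum (wt q \<circ> cns (k - i)) (DD i)"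
        unfolding P_def by (rule infsum_reindex) (meson inj_cns inj_on_subset subset_UNIV)
      also have "\<dots> = infsum (\<lambda>\<beta>. q ^ i * wt q \<beta>) (DD i)"
        by (intro infsum_cong) (simp add: DD_def wt_cns)
      also have "\<dots> = q ^ i * infsum (wt q) (DD i)" by (rule infsum_cmult_right') 
      finally show ?thesis .
    qed
    have "infsum (wt q) (DD k) = (\<Sum>i\<le>k. infsum (wt q) (P i))"
      unfolding DDeq by (rule sum_infsum[symmetric]) (simp_all add: summ disj)
    also have "\<dots> = (\<Sum>i\<le>k. q ^ i * infsum (wt q) (DD i))" by (simp only: Pval)
    also have "\<dots> = (\<Sum>i<Suc k. q ^ i * infsum (wt q) (DD i))" by (simp only: lessThan_Suc_atMost)
    also have "\<dots> = (\<Sum>i<k. q ^ i * infsum (wt q) (DD i)) + q ^ k * infsum (wt q) (DD k)"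
      by (rule sum.lessThan_Suc)
    also have "(\<Sum>i<k. q ^ i * infsum (wt q) (DD i)) = (\<Sum>i<k. q ^ i / qpoch q i)"
      by (rule sum.cong) (simp_all add: less.IH)
    also have "(\<Sum>i<k. q ^ i / qpoch q i) = 1 / qpoch q k'"
      using geo_id[OF q, of k'] Suc by (simp only: lessThan_Suc_atMost)
    finally have eq: "infsum (wt q) (DD k) * (1 - q ^ k) = 1 / qpoch q k'" by (simp add: algebra_simps)
    have "q ^ k < 1" using Suc power_Suc_less_one[OF q, of k'] by (simp del: power_Suc)
    then have "1 - q ^ k > 0" by simp
    then show ?thesis using eq Suc qpoch_pos[OF q, of k'] by (simp add: qpoch_Suc field_simps)
  qed
qed




definition Mats :: "nat list \<Rightarrow> nat list \<Rightarrow> (nat \<times> nat) set set" where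
  "Mats r c = {A. A \<subseteq> {0..<length r} \<times> {0..<length c} \<and>
      (\<forall>i<length r. card {j. (i,j) \<in> A} = r ! i) \<and>
      (\<forall>j<length c. card {i. (i,j) \<in> A} = c ! j)}"

lemma emcoeff_Mats: "emcoeff r c = card (Mats r c)"
  unfolding emcoeff_def Mats_def ..

lemma finite_Mats: "finite (Mats r c)"
proof -
  have "Mats r c \<subseteq> Pow ({0..<length r} \<times> {0..<length c})" by (auto simp: Mats_def)
  then show ?thesis by (rule finite_subset) simp
qed

definition spos :: "nat list \<Rightarrow> nat set" where
  "spos r = {i. i < length r \<and> 0 < r ! i}"
definition subS :: "nat list \<Rightarrow> nat set \<Rightarrow> nat list" where
  "subS r S = map (\<lambda>i. r ! i - (if i \<in> S then 1 else 0)) [0..<length r]"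
definition ins :: "nat set \<Rightarrow> (nat \<times> nat) set \<Rightarrow> (nat \<times> nat) set" where
  "ins S B = (\<lambda>i. (i, 0)) ` S \<union> (\<lambda>(i,j). (i, Suc j)) ` B"
definition Subs :: "nat list \<Rightarrow> nat \<Rightarrow> nat set set" where
  "Subs r a = {S. S \<subseteq> spos r \<and> card S = a}"

lemma finite_spos[simp]: "finite (spos r)" by (auto simp: spos_def)
lemma finite_Subs: "finite (Subs r a)"
  unfolding Subs_def by (rule finite_subset[of _ "Pow (spos r)"]) auto

lemma length_subS[simp]: "length (subS r S) = length r" by (simp add: subS_def)
lemma nth_subS[simp]: "i < length r \<Longrightarrow> subS r S ! i = r ! i - (if i \<in> S then 1 else 0)"
  by (simp add: subS_def)

lemma ins_mem0[simp]: "(i, 0) \<in> ins S B \<longleftrightarrow> i \<in> S" by (auto simp: ins_def)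
lemma ins_memS[simp]: "(i, Suc j) \<in> ins S B \<longleftrightarrow> (i, j) \<in> B" by (auto simp: ins_def)

lemma row_ins: "{j. (i,j) \<in> ins S B} = (if i \<in> S then {0} else {}) \<union> Suc ` {j. (i,j) \<in> B}"
proof -
  have "j \<in> {j. (i,j) \<in> ins S B} \<longleftrightarrow> j \<in> (if i \<in> S then {0} else {}) \<union> Suc ` {j. (i,j) \<in> B}" for j
    by (cases j) auto
  then show ?thesis by blast
qed

lemma card_row_ins: assumes "finite {j. (i,j) \<in> B}"
  shows "card {j. (i,j) \<in> ins S B} = (if i \<in> S then 1 else 0) + card {j. (i,j) \<in> B}"
proof (cases "i \<in> S")
  case True
  then have "{j. (i,j) \<in> ins S B} = insert 0 (Suc ` {j. (i,j) \<in> B})" using row_ins by simp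
  moreover have "0 \<notin> Suc ` {j. (i,j) \<in> B}" by auto
  ultimately show ?thesis using True assms by (simp add: card_image)
next
  case False
  then have "{j. (i,j) \<in> ins S B} = Suc ` {j. (i,j) \<in> B}" using row_ins by simp
  then show ?thesis using False by (simp add: card_image)
qed

lemma col0_ins: "{i. (i, 0) \<in> ins S B} = S" by simp
lemma colS_ins: "{i. (i, Suc j) \<in> ins S B} = {i. (i, j) \<in> B}" by simp

lemma ins_inj: "inj (ins (S :: nat set))"
proof (rule injI)
  fix B B' assume "ins S B = ins S B'"
  then have "(i, Suc j) \<in> ins S B \<longleftrightarrow> (i, Suc j) \<in> ins S B'" for i j by simp
  then show "B = B'" by auto
qed

lemma fin_row: "A \<subseteq> {0..<(L::nat)} \<times> {0..<(n::nat)} \<Longrightarrow> finite {j. (i,j) \<in> A}"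
  by (rule finite_subset[of _ "{0..<n}"]) auto

lemma Mats_Cons: "Mats r (a # w) = (\<Union>S\<in>Subs r a. ins S ` Mats (subS r S) w)"
proof
  show "Mats r (a # w) \<subseteq> (\<Union>S\<in>Subs r a. ins S ` Mats (subS r S) w)"
  proof
    fix A assume A: "A \<in> Mats r (a # w)"
    define S where "S = {i. (i, 0) \<in> A}"
    define B where "B = {(i,j). (i, Suc j) \<in> A}"
    have Asub: "A \<subseteq> {0..<length r} \<times> {0..<Suc (length w)}" using A by (auto simp: Mats_def)
    have AB: "A = ins S B"
    proof -
      have "p \<in> A \<longleftrightarrow> p \<in> ins S B" for p
        by (cases p; rename_tac i j; case_tac j) (auto simp: S_def B_def)
      then show ?thesis by blast
    qed
    have Bsub: "B \<subseteq> {0..<length r} \<times> {0..<length w}" using Asub by (auto simp: B_def)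
    have rowA: "card {j. (i,j) \<in> A} = r ! i" if "i < length r" for i
      using A that by (auto simp: Mats_def)
    have Sspos: "S \<subseteq> spos r"
    proof
      fix i assume "i \<in> S"
      then have i: "i < length r" "(i,0) \<in> A" using Asub by (auto simp: S_def)
      have "{j. (i,j) \<in> A} \<noteq> {}" using i by auto
      then have "card {j. (i,j) \<in> A} > 0" using fin_row[OF Asub] by (simp add: card_gt_0_iff)
      then show "i \<in> spos r" using rowA[OF i(1)] i by (simp add: spos_def)
    qed
    have cS: "card S = a" using A unfolding Mats_def S_def by force
    have "B \<in> Mats (subS r S) w"
      unfolding Mats_def
    proof (intro CollectI conjI allI impI)
      show "B \<subseteq> {0..<length (subS r S)} \<times> {0..<length w}" using Bsub by simp
    next
      fix i assume "i < length (subS r S)"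
      then have i: "i < length r" by simp
      have "r ! i = (if i \<in> S then 1 else 0) + card {j. (i,j) \<in> B}"
        using rowA[OF i] card_row_ins[OF fin_row[OF Bsub], of i S] AB by simp
      then show "card {j. (i, j) \<in> B} = subS r S ! i" using i by simp
    next
      fix j assume j: "j < length w"
      have "{i. (i,j) \<in> B} = {i. (i, Suc j) \<in> A}" by (simp add: B_def)
      then show "card {i. (i, j) \<in> B} = w ! j" using A j by (auto simp: Mats_def)
    qed
    then show "A \<in> (\<Union>S\<in>Subs r a. ins S ` Mats (subS r S) w)"
      using AB Sspos cS by (auto simp: Subs_def)
  qed
next
  show "(\<Union>S\<in>Subs r a. ins S ` Mats (subS r S) w) \<subseteq> Mats r (a # w)"
  proof
    fix A assume "A \<in> (\<Union>S\<in>Subs r a. ins S ` Mats (subS r S) w)"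
    then obtain S B where S: "S \<subseteq> spos r" "card S = a" and B: "B \<in> Mats (subS r S) w" and AB: "A = ins S B"
      by (auto simp: Subs_def)
    have Bsub: "B \<subseteq> {0..<length r} \<times> {0..<length w}" using B by (auto simp: Mats_def)
    show "A \<in> Mats r (a # w)"
      unfolding Mats_def
    proof (intro CollectI conjI allI impI)
      show "A \<subseteq> {0..<length r} \<times> {0..<length (a # w)}"
        using S(1) Bsub unfolding AB ins_def spos_def by auto
    next
      fix i assume i: "i < length r"
      have rb: "card {j. (i,j) \<in> B} = r ! i - (if i \<in> S then 1 else 0)"
        using B i by (auto simp: Mats_def)
      have "i \<in> S \<Longrightarrow> 0 < r ! i" using S(1) by (auto simp: spos_def)
      then show "card {j. (i, j) \<in> A} = r ! i"
        unfolding AB card_row_ins[OF fin_row[OF Bsub]] rb by auto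
    next
      fix j assume j: "j < length (a # w)"
      show "card {i. (i, j) \<in> A} = (a # w) ! j"
      proof (cases j)
        case 0 then show ?thesis using S AB by simp
      next
        case (Suc j')
        then have "j' < length w" using j by simp
        then show ?thesis using B Suc AB by (auto simp: Mats_def)
      qed
    qed
  qed
qed

lemma emcoeff_Cons: "emcoeff r (a # w) = (\<Sum>S\<in>Subs r a. emcoeff (subS r S) w)"
proof -
  have "emcoeff r (a # w) = card (\<Union>S\<in>Subs r a. ins S ` Mats (subS r S) w)"
    by (simp add: emcoeff_Mats Mats_Cons)
  also have "\<dots> = (\<Sum>S\<in>Subs r a. card (ins S ` Mats (subS r S) w))"
  proof (rule card_UN_disjoint)
    show "finite (Subs r a)" by (rule finite_Subs)
    show "\<forall>S\<in>Subs r a. finite (ins S ` Mats (subS r S) w)" using finite_Mats by blast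
    show "\<forall>S\<in>Subs r a. \<forall>S'\<in>Subs r a. S \<noteq> S' \<longrightarrow> ins S ` Mats (subS r S) w \<inter> ins S' ` Mats (subS r S') w = {}"
    proof (intro ballI impI)
      fix S S' :: "nat set" assume "S \<noteq> S'"
      then have "ins S B \<noteq> ins S' B'" for B B' by (metis col0_ins)
      then show "ins S ` Mats (subS r S) w \<inter> ins S' ` Mats (subS r S') w = {}" by blast
    qed
  qed
  also have "\<dots> = (\<Sum>S\<in>Subs r a. emcoeff (subS r S) w)"
    by (intro sum.cong refl) (simp add: emcoeff_Mats card_image inj_on_subset[OF ins_inj])
  finally show ?thesis .
qed

lemma emcoeff_Nil: "emcoeff r [] = (if \<forall>x\<in>set r. x = 0 then 1 else 0)"
proof -
  have "Mats r [] = (if \<forall>x\<in>set r. x = 0 then {{}} else {})"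
  proof (cases "\<forall>x\<in>set r. x = 0")
    case True
    then have "\<forall>i<length r. r ! i = 0" by (simp add: nth_mem)
    then show ?thesis using True by (auto simp: Mats_def)
  next
    case False
    then obtain i where "i < length r" "r ! i \<noteq> 0" by (metis in_set_conv_nth)
    then show ?thesis using False by (auto simp: Mats_def)
  qed
  then show ?thesis by (simp add: emcoeff_Mats)
qed

lemma emcoeff_permute_le:
  assumes p: "p permutes {..<length w}"
  shows "emcoeff r w \<le> emcoeff r (permute_list p w)"
proof -
  define g where "g = (\<lambda>(i::nat, j). (i, inv p j))"
  have ip: "inv p permutes {..<length w}" using permutes_inv[OF p] .
  have injg: "inj g" unfolding g_def
    by (rule injI) (auto simp: permutes_inj[OF ip, THEN inj_eq])
  have img: "(\<lambda>A. g ` A) ` Mats r w \<subseteq> Mats r (permute_list p w)"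
  proof
    fix A' assume "A' \<in> (\<lambda>A. g ` A) ` Mats r w"
    then obtain A where A: "A \<in> Mats r w" and A': "A' = g ` A" by blast
    have Asub: "A \<subseteq> {0..<length r} \<times> {0..<length w}" using A by (simp add: Mats_def)
    show "A' \<in> Mats r (permute_list p w)"
      unfolding Mats_def
    proof (intro CollectI conjI allI impI)
      show "A' \<subseteq> {0..<length r} \<times> {0..<length (permute_list p w)}"
      proof
        fix x assume "x \<in> A'"
        then obtain i j where "(i,j) \<in> A" "x = (i, inv p j)" using A' by (auto simp: g_def)
        then show "x \<in> {0..<length r} \<times> {0..<length (permute_list p w)}"
          using Asub permutes_in_image[OF ip, of j] by auto
      qed
    next
      fix i assume i: "i < length r"
      have "{j'. (i,j') \<in> A'} = inv p ` {j. (i,j) \<in> A}" using A' by (auto simp: g_def)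
      then have "card {j'. (i,j') \<in> A'} = card {j. (i,j) \<in> A}"
        by (simp add: card_image inj_on_subset[OF permutes_inj[OF ip]])
      then show "card {j. (i, j) \<in> A'} = r ! i" using A i by (simp add: Mats_def)
    next
      fix j' assume j': "j' < length (permute_list p w)"
      have "{i. (i,j') \<in> A'} = {i. (i, p j') \<in> A}"
      proof -
        have "(i,j') \<in> A' \<longleftrightarrow> (i, p j') \<in> A" for i
        proof
          assume "(i,j') \<in> A'"
          then obtain j where "(i,j) \<in> A" "j' = inv p j" using A' by (auto simp: g_def)
          then show "(i, p j') \<in> A" using permutes_inverses(1)[OF p] by simp
        next
          assume "(i, p j') \<in> A"
          moreover have "g (i, p j') = (i, j')" using permutes_inverses(2)[OF p] by (simp add: g_def)
          ultimately show "(i,j') \<in> A'" using A' by force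
        qed
        then show ?thesis by blast
      qed
      moreover have "p j' < length w" using j' permutes_in_image[OF p, of j'] by simp
      ultimately show "card {i. (i, j') \<in> A'} = permute_list p w ! j'"
        using A j' by (simp add: Mats_def permute_list_nth[OF p])
    qed
  qed
  have "inj_on (\<lambda>A. g ` A) (Mats r w)"
    by (rule inj_onI) (simp add: inj_image_eq_iff[OF injg])
  then have "card (Mats r w) \<le> card (Mats r (permute_list p w))"
    using card_inj_on_le[OF _ img finite_Mats] by blast
  then show ?thesis by (simp add: emcoeff_Mats)
qed

lemma emcoeff_mset:
  assumes "mset w = mset w'"
  shows "emcoeff r w = emcoeff r w'"
proof -
  obtain p where p: "p permutes {..<length w'}" "permute_list p w' = w"
    using mset_eq_permutation[OF assms] by blast
  have l: "length w = length w'" using assms by (metis size_mset)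
  have ip: "inv p permutes {..<length w}" using permutes_inv[OF p(1)] l by simp
  have "emcoeff r w' \<le> emcoeff r w" using emcoeff_permute_le[OF p(1)] p(2) by simp
  moreover have "emcoeff r w \<le> emcoeff r (permute_list (inv p) w)" using emcoeff_permute_le[OF ip] .
  moreover have "permute_list (inv p) w = w'"
  proof -
    have "permute_list (inv p) w = permute_list (p \<circ> inv p) w'"
      using p(2) permute_list_compose[OF permutes_inv[OF p(1)], of p] by simp
    also have "\<dots> = w'" using permutes_inv_o(1)[OF p(1)] by simp
    finally show ?thesis .
  qed
  ultimately show ?thesis by simp
qed




lemma sum_list_minus1: "sum_list (map (\<lambda>x. x - 1) r) + length (filter (\<lambda>x. 0 < x) r) = sum_list (r :: nat list)"
  by (induction r) auto

function cnj :: "nat list \<Rightarrow> nat list" where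
  "cnj r = (if \<forall>x\<in>set r. x = 0 then [] else length (filter (\<lambda>x. 0 < x) r) # cnj (map (\<lambda>x. x - 1) r))"
  by auto
termination
proof (relation "Wellfounded.measure sum_list")
  fix r :: "nat list" assume "\<not> (\<forall>x\<in>set r. x = 0)"
  then have "length (filter (\<lambda>x. 0 < x) r) > 0" by (auto simp: length_greater_0_conv filter_empty_conv)
  then have "sum_list (map (\<lambda>x. x - 1) r) < sum_list (map (\<lambda>x. x - 1) r) + length (filter (\<lambda>x. 0 < x) r)"
    by (rule less_add_same_cancel1[THEN iffD2])
  then have "sum_list (map (\<lambda>x. x - 1) r) < sum_list r" by (simp only: sum_list_minus1)
  then show "(map (\<lambda>x. x - 1) r, r) \<in> Wellfounded.measure sum_list" by simp
qed simp

declare cnj.simps[simp del]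

lemma cnj_zero[simp]: "\<forall>x\<in>set r. x = 0 \<Longrightarrow> cnj r = []"
  by (subst cnj.simps) simp

lemma cnj_nz: "\<not> (\<forall>x\<in>set r. x = 0) \<Longrightarrow> cnj r = length (filter (\<lambda>x. 0 < x) r) # cnj (map (\<lambda>x. x - 1) r)"
  by (subst cnj.simps) simp

lemma conj_sum: "sum_list (cnj r) = sum_list r"
proof (induction r rule: cnj.induct)
  case (1 r)
  show ?case
  proof (cases "\<forall>x\<in>set r. x = 0")
    case True
    then have "sum_list r = 0" by (simp add: sum_list_eq_0_iff)
    then show ?thesis using True by simp
  next
    case False
    then show ?thesis using 1 sum_list_minus1[of r] by (simp add: cnj_nz)
  qed
qed

lemma conj_pos: "0 \<notin> set (cnj r)"
proof (induction r rule: cnj.induct)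
  case (1 r)
  show ?case
  proof (cases "\<forall>x\<in>set r. x = 0")
    case True then show ?thesis by simp
  next
    case False
    then have "length (filter (\<lambda>x. 0 < x) r) > 0" by (auto simp: length_greater_0_conv filter_empty_conv)
    then show ?thesis using 1 False by (simp add: cnj_nz)
  qed
qed

lemma npos_mono: "length (filter (\<lambda>x. 0 < x) (map (\<lambda>x. x - 1) r)) \<le> length (filter (\<lambda>x. 0 < x) (r :: nat list))"
  by (induction r) auto

lemma conj_le: "\<forall>y\<in>set (cnj r). y \<le> length (filter (\<lambda>x. 0 < x) r)"
proof (induction r rule: cnj.induct)
  case (1 r)
  show ?case
  proof (cases "\<forall>x\<in>set r. x = 0")
    case True then show ?thesis by simp
  next
    case False
    then show ?thesis using 1 npos_mono[of r] by (auto simp: cnj_nz)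
  qed
qed

lemma conj_sorted: "sorted (rev (cnj r))"
proof (induction r rule: cnj.induct)
  case (1 r)
  show ?case
  proof (cases "\<forall>x\<in>set r. x = 0")
    case True then show ?thesis by simp
  next
    case False
    have "\<forall>y\<in>set (cnj (map (\<lambda>x. x - 1) r)). y \<le> length (filter (\<lambda>x. 0 < x) r)"
      using conj_le[of "map (\<lambda>x. x - 1) r"] npos_mono[of r] by auto
    then show ?thesis using 1 False by (simp add: sorted_append cnj_nz)
  qed
qed

lemma conj_partitions: "cnj r \<in> partitions (sum_list r)"
  unfolding partitions_def using conj_sum conj_pos conj_sorted by auto

lemma conj_cnt: "(if i < length (cnj r) then cnj r ! i else 0) = length (filter (\<lambda>x. i < x) r)"
proof (induction r arbitrary: i rule: cnj.induct)
  case (1 r)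
  show ?case
  proof (cases "\<forall>x\<in>set r. x = 0")
    case True
    then have "filter (\<lambda>x. i < x) r = []" by (auto simp: filter_empty_conv)
    then show ?thesis using True by simp
  next
    case False
    show ?thesis
    proof (cases i)
      case 0 then show ?thesis using False by (simp add: cnj_nz)
    next
      case (Suc i')
      have e: "cnj r = length (filter (\<lambda>x. 0 < x) r) # cnj (map (\<lambda>x. x - 1) r)" by (rule cnj_nz[OF False])
      have "(if i < length (cnj r) then cnj r ! i else 0) =
          (if i' < length (cnj (map (\<lambda>x. x - 1) r)) then cnj (map (\<lambda>x. x - 1) r) ! i' else 0)"
        unfolding e Suc by simp
      also have "\<dots> = length (filter (\<lambda>x. i' < x) (map (\<lambda>x. x - 1) r))" by (rule 1[OF False])
      also have "\<dots> = length (filter (\<lambda>x. i < x) r)"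
        unfolding filter_map length_map o_def using Suc by (metis less_diff_conv plus_1_eq_Suc add.commute)
      finally show ?thesis .
    qed
  qed
qed

lemma filter_split_cnt: "0 < v \<Longrightarrow> length (filter (\<lambda>x. v - 1 < x) r) = count_list r v + length (filter (\<lambda>x. v < x) (r :: nat list))"
  by (induction r) auto

lemma partitions_mset_eq: "nu \<in> partitions k \<Longrightarrow> nu' \<in> partitions k' \<Longrightarrow> mset nu = mset nu' \<Longrightarrow> nu = nu'"
proof -
  assume a: "nu \<in> partitions k" "nu' \<in> partitions k'" "mset nu = mset nu'"
  have "sort (rev nu) = rev nu'" using a by (intro properties_for_sort) (auto simp: partitions_def)
  moreover have "sort (rev nu) = rev nu" using a by (intro sorted_sort_id) (auto simp: partitions_def)
  ultimately show ?thesis by simp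
qed

lemma conj_inj: "inj_on cnj (partitions n)"
proof (rule inj_onI)
  fix r1 r2 assume r: "r1 \<in> partitions n" "r2 \<in> partitions n" "cnj r1 = cnj r2"
  have cnt: "length (filter (\<lambda>x. i < x) r1) = length (filter (\<lambda>x. i < x) r2)" for i
  proof -
    have "length (filter (\<lambda>x. i < x) r1) = (if i < length (cnj r1) then cnj r1 ! i else 0)"
      by (rule conj_cnt[symmetric])
    also have "\<dots> = (if i < length (cnj r2) then cnj r2 ! i else 0)" by (simp only: r(3))
    also have "\<dots> = length (filter (\<lambda>x. i < x) r2)" by (rule conj_cnt)
    finally show ?thesis .
  qed
  have "count (mset r1) v = count (mset r2) v" for v
  proof (cases "v = 0")
    case True
    then have "v \<notin> set r1" "v \<notin> set r2" using r by (auto simp: partitions_def)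
    have "count (mset r1) v = 0" using \<open>v \<notin> set r1\<close> by (rule count_mset_0_iff[THEN iffD2])
    moreover have "count (mset r2) v = 0" using \<open>v \<notin> set r2\<close> by (rule count_mset_0_iff[THEN iffD2])
    ultimately show ?thesis by metis
  next
    case False
    then show ?thesis using filter_split_cnt[of v r1] filter_split_cnt[of v r2] cnt[of "v - 1"] cnt[of v]
      by (simp add: count_mset)
  qed
  then have "mset r1 = mset r2" by (simp add: multiset_eq_iff)
  then show "r1 = r2" using partitions_mset_eq r by blast
qed

lemma npos_card: "length (filter (\<lambda>x. 0 < x) r) = card (spos r)"
  unfolding spos_def by (simp add: length_filter_conv_card)

lemma subS_spos: "subS r (spos r) = map (\<lambda>x. x - 1) r"
  by (rule nth_equalityI) (auto simp: spos_def)

lemma conj_Cons: "\<not> (\<forall>x\<in>set r. x = 0) \<Longrightarrow> cnj r = card (spos r) # cnj (map (\<lambda>x. x - 1) r)"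
  using cnj_nz npos_card by metis

lemma emcoeff_conj: "emcoeff r (cnj r) > 0"
proof (induction r rule: cnj.induct)
  case (1 r)
  show ?case
  proof (cases "\<forall>x\<in>set r. x = 0")
    case True then show ?thesis by (simp add: emcoeff_Nil)
  next
    case False
    have mem: "spos r \<in> Subs r (card (spos r))" by (simp add: Subs_def)
    have "emcoeff (subS r (spos r)) (cnj (map (\<lambda>x. x - 1) r)) > 0"
      using 1[OF False] by (simp add: subS_spos)
    also have "emcoeff (subS r (spos r)) (cnj (map (\<lambda>x. x - 1) r))
       \<le> (\<Sum>S\<in>Subs r (card (spos r)). emcoeff (subS r S) (cnj (map (\<lambda>x. x - 1) r)))"
      by (rule member_le_sum[OF mem]) (auto simp: finite_Subs)
    finally have "0 < (\<Sum>S\<in>Subs r (card (spos r)). emcoeff (subS r S) (cnj (map (\<lambda>x. x - 1) r)))" .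
    then show ?thesis by (simp only: conj_Cons[OF False] emcoeff_Cons)
  qed
qed

lemma emcoeff_lex: "0 \<notin> set w \<Longrightarrow> emcoeff r w > 0 \<Longrightarrow> w \<le> cnj r"
proof (induction w arbitrary: r)
  case Nil then show ?case by simp
next
  case (Cons a w)
  have "(\<Sum>S\<in>Subs r a. emcoeff (subS r S) w) > 0" using Cons.prems by (simp add: emcoeff_Cons)
  have "\<exists>S\<in>Subs r a. emcoeff (subS r S) w > 0"
  proof (rule ccontr)
    assume "\<not> (\<exists>S\<in>Subs r a. emcoeff (subS r S) w > 0)"
    then have "\<forall>S\<in>Subs r a. emcoeff (subS r S) w = 0" by simp
    then have "(\<Sum>S\<in>Subs r a. emcoeff (subS r S) w) = 0" by simp
    with \<open>(\<Sum>S\<in>Subs r a. emcoeff (subS r S) w) > 0\<close> show False by simp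
  qed
  then obtain S where S: "S \<in> Subs r a" "emcoeff (subS r S) w > 0" by blast
  have a: "a > 0" using Cons.prems by auto
  have Ssub: "S \<subseteq> spos r" "card S = a" using S by (auto simp: Subs_def)
  then have "spos r \<noteq> {}" using a by auto
  then have nz: "\<not> (\<forall>x\<in>set r. x = 0)" by (auto simp: spos_def)
  have le: "a \<le> card (spos r)" using Ssub card_mono[OF finite_spos] by blast
  show ?case
  proof (cases "a < card (spos r)")
    case True then show ?thesis using nz by (simp add: conj_Cons)
  next
    case False
    then have "a = card (spos r)" using le by simp
    then have "S = spos r" using Ssub card_subset_eq[OF finite_spos] by metis
    then have "w \<le> cnj (map (\<lambda>x. x - 1) r)" using Cons.IH[of "map (\<lambda>x. x - 1) r"] Cons.prems S
      by (simp add: subS_spos)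
    then show ?thesis using nz \<open>a = card (spos r)\<close> by (simp add: conj_Cons)
  qed
qed




lemma tri_solve:
  fixes Q :: "'a::linorder set" and A :: "'a \<Rightarrow> 'a \<Rightarrow> real"
  assumes "finite Q"
  shows "(\<forall>x\<in>Q. \<forall>k\<in>Q. A x k \<noteq> 0 \<longrightarrow> k \<le> x) \<Longrightarrow> (\<forall>x\<in>Q. A x x \<noteq> 0) \<Longrightarrow>
    \<exists>g. \<forall>k\<in>Q. (\<Sum>x\<in>Q. g x * A x k) = b k"
  using assms
proof (induction Q rule: finite_linorder_min_induct)
  case empty then show ?case by simp
next
  case (insert t Q)
  have h1: "\<forall>x\<in>Q. \<forall>k\<in>Q. A x k \<noteq> 0 \<longrightarrow> k \<le> x" using insert.prems(1) by simp
  have h2: "\<forall>x\<in>Q. A x x \<noteq> 0" using insert.prems(2) by simp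
  obtain g where g: "\<forall>k\<in>Q. (\<Sum>x\<in>Q. g x * A x k) = b k" using insert.IH[OF h1 h2] by blast
  have tQ: "t \<notin> Q" using insert.hyps(2) by blast
  have At: "A t k = 0" if "k \<in> Q" for k
  proof (rule ccontr)
    assume "A t k \<noteq> 0"
    then have "k \<le> t" using insert.prems(1) that by simp
    moreover have "t < k" using insert.hyps(2) that by simp
    ultimately show False by simp
  qed
  define g' where "g' = g(t := (b t - (\<Sum>x\<in>Q. g x * A x t)) / A t t)"
  have sQ: "(\<Sum>x\<in>Q. g' x * A x k) = (\<Sum>x\<in>Q. g x * A x k)" for k
    using tQ by (intro sum.cong) (auto simp: g'_def)
  have "\<forall>k\<in>insert t Q. (\<Sum>x\<in>insert t Q. g' x * A x k) = b k"
  proof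
    fix k assume k: "k \<in> insert t Q"
    have "(\<Sum>x\<in>insert t Q. g' x * A x k) = g' t * A t k + (\<Sum>x\<in>Q. g x * A x k)"
      using tQ insert.hyps(1) by (simp add: sQ)
    also have "\<dots> = b k"
    proof (cases "k = t")
      case True
      have "A t t \<noteq> 0" using insert.prems(2) by auto
      then show ?thesis using True by (simp add: g'_def)
    next
      case False
      then have "k \<in> Q" using k by auto
      then show ?thesis using g At by simp
    qed
    finally show "(\<Sum>x\<in>insert t Q. g' x * A x k) = b k" .
  qed
  then show ?case by blast
qed

lemma tri_unique:
  fixes Q :: "'a::linorder set" and A :: "'a \<Rightarrow> 'a \<Rightarrow> real"
  assumes "finite Q"
  shows "(\<forall>x\<in>Q. \<forall>k\<in>Q. A x k \<noteq> 0 \<longrightarrow> k \<le> x) \<Longrightarrow> (\<forall>x\<in>Q. A x x \<noteq> 0) \<Longrightarrow>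
    (\<forall>k\<in>Q. (\<Sum>x\<in>Q. g x * A x k) = 0) \<Longrightarrow> \<forall>x\<in>Q. g x = 0"
  using assms
proof (induction Q rule: finite_linorder_min_induct)
  case empty then show ?case by simp
next
  case (insert t Q)
  have h1: "\<forall>x\<in>Q. \<forall>k\<in>Q. A x k \<noteq> 0 \<longrightarrow> k \<le> x" using insert.prems(1) by simp
  have h2: "\<forall>x\<in>Q. A x x \<noteq> 0" using insert.prems(2) by simp
  have tQ: "t \<notin> Q" using insert.hyps(2) by blast
  have At: "A t k = 0" if "k \<in> Q" for k
  proof (rule ccontr)
    assume "A t k \<noteq> 0"
    then have "k \<le> t" using insert.prems(1) that by simp
    moreover have "t < k" using insert.hyps(2) that by simp
    ultimately show False by simp
  qed
  have eq: "(\<Sum>x\<in>insert t Q. g x * A x k) = g t * A t k + (\<Sum>x\<in>Q. g x * A x k)" for k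
    using tQ insert.hyps(1) by simp
  have "\<forall>k\<in>Q. (\<Sum>x\<in>Q. g x * A x k) = 0" using insert.prems(3) eq At by auto
  then have g0: "\<forall>x\<in>Q. g x = 0" using insert.IH[OF h1 h2] by blast
  then have "(\<Sum>x\<in>Q. g x * A x t) = 0" by simp
  then have "g t * A t t = 0" using insert.prems(3) eq[of t] by simp
  moreover have "A t t \<noteq> 0" using insert.prems(2) by auto
  ultimately show ?case using g0 by simp
qed

definition PRG :: "nat \<Rightarrow> (nat list \<Rightarrow> nat list \<Rightarrow> real) \<Rightarrow> bool" where
  "PRG n G \<longleftrightarrow> (\<forall>lam nu. (lam \<notin> partitions n \<or> nu \<notin> partitions n) \<longrightarrow> G lam nu = 0) \<and>
      (\<forall>lam\<in>partitions n. \<forall>ka\<in>partitions n.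
         (\<Sum>nu\<in>partitions n. G lam nu * real (emcoeff nu ka)) = (if lam = ka then 1 else 0))"

lemma partitions_finite: "finite (partitions k)"
proof -
  have len: "length xs \<le> sum_list xs" if "0 \<notin> set xs" for xs :: "nat list"
    using that by (induction xs) (auto simp: Suc_le_eq)
  have "partitions k \<subseteq> {xs. set xs \<subseteq> {..k} \<and> length xs \<le> k}"
  proof
    fix xs assume "xs \<in> partitions k"
    then have "0 \<notin> set xs" "sum_list xs = k" by (auto simp: partitions_def)
    then show "xs \<in> {xs. set xs \<subseteq> {..k} \<and> length xs \<le> k}"
      using len[of xs] member_le_sum_list[of _ xs] by auto
  qed
  then show ?thesis by (rule finite_subset) (rule finite_lists_length_le, simp)
qed

lemma me_coeff_PRG: "PRG n (me_coeff n)"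
proof -
  let ?P = "partitions n"
  have fin: "finite ?P" by (rule partitions_finite)
  have inj: "inj_on cnj ?P" by (rule conj_inj)
  have img: "cnj ` ?P = ?P"
  proof (rule endo_inj_surj[OF fin _ inj])
    show "cnj ` ?P \<subseteq> ?P" using conj_partitions by (auto simp: partitions_def)
  qed
  define ci where "ci = the_inv_into ?P cnj"
  have ciP: "ci x \<in> ?P" if "x \<in> ?P" for x
    unfolding ci_def using the_inv_into_into[OF inj] that img by blast
  have cci: "cnj (ci x) = x" if "x \<in> ?P" for x
    unfolding ci_def using f_the_inv_into_f[OF inj] that img by blast
  have icc: "ci (cnj x) = x" if "x \<in> ?P" for x
    unfolding ci_def using the_inv_into_f_f[OF inj that] .
  define A where "A x k = real (emcoeff (ci x) k)" for x k
  have tri: "\<forall>x\<in>?P. \<forall>k\<in>?P. A x k \<noteq> 0 \<longrightarrow> k \<le> x"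
  proof (intro ballI impI)
    fix x k assume xk: "x \<in> ?P" "k \<in> ?P" "A x k \<noteq> 0"
    have "0 \<notin> set k" using xk(2) by (simp add: partitions_def)
    then have "k \<le> cnj (ci x)" using emcoeff_lex xk(3) by (simp add: A_def)
    then show "k \<le> x" using cci[OF xk(1)] by simp
  qed
  have diag: "\<forall>x\<in>?P. A x x \<noteq> 0"
  proof
    fix x assume x: "x \<in> ?P"
    have "emcoeff (ci x) (cnj (ci x)) > 0" by (rule emcoeff_conj)
    then show "A x x \<noteq> 0" using cci[OF x] by (simp add: A_def)
  qed
  have reidx: "(\<Sum>nu\<in>?P. h (cnj nu) * real (emcoeff nu ka)) = (\<Sum>x\<in>?P. h x * A x ka)" for h ka
  proof -
    have "(\<Sum>x\<in>?P. h x * A x ka) = (\<Sum>x\<in>cnj ` ?P. h x * A x ka)" by (simp only: img)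
    also have "\<dots> = (\<Sum>nu\<in>?P. h (cnj nu) * A (cnj nu) ka)" by (simp add: sum.reindex[OF inj])
    also have "\<dots> = (\<Sum>nu\<in>?P. h (cnj nu) * real (emcoeff nu ka))"
      by (intro sum.cong refl) (simp add: A_def icc)
    finally show ?thesis by simp
  qed
  have exq: "\<exists>G. PRG n G"
  proof -
    have "\<forall>lam\<in>?P. \<exists>g. \<forall>k\<in>?P. (\<Sum>x\<in>?P. g x * A x k) = (if lam = k then 1 else 0)"
      by (intro ballI tri_solve[OF fin tri diag])
    then obtain gg where gg: "\<forall>lam\<in>?P. \<forall>k\<in>?P. (\<Sum>x\<in>?P. gg lam x * A x k) = (if lam = k then 1 else 0)"
      by metis
    define G where "G lam nu = (if lam \<in> ?P \<and> nu \<in> ?P then gg lam (cnj nu) else 0)" for lam nu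
    have "PRG n G"
      unfolding PRG_def
    proof (intro conjI allI impI ballI)
      fix lam nu assume "lam \<notin> ?P \<or> nu \<notin> ?P" then show "G lam nu = 0" by (auto simp: G_def)
    next
      fix lam ka assume l: "lam \<in> ?P" and k: "ka \<in> ?P"
      have "(\<Sum>nu\<in>?P. G lam nu * real (emcoeff nu ka)) = (\<Sum>nu\<in>?P. gg lam (cnj nu) * real (emcoeff nu ka))"
        using l by (intro sum.cong refl) (simp add: G_def)
      also have "\<dots> = (\<Sum>x\<in>?P. gg lam x * A x ka)" by (rule reidx)
      also have "\<dots> = (if lam = ka then 1 else 0)" using gg l k by blast
      finally show "(\<Sum>nu\<in>?P. G lam nu * real (emcoeff nu ka)) = (if lam = ka then 1 else 0)" .
    qed
    then show ?thesis by blast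
  qed
  have uniq: "G1 = G2" if "PRG n G1" "PRG n G2" for G1 G2
  proof (intro ext)
    fix lam nu
    show "G1 lam nu = G2 lam nu"
    proof (cases "lam \<in> ?P \<and> nu \<in> ?P")
      case False then show ?thesis using that by (auto simp: PRG_def)
    next
      case True
      define g where "g x = G1 lam (ci x) - G2 lam (ci x)" for x
      have "\<forall>k\<in>?P. (\<Sum>x\<in>?P. g x * A x k) = 0"
      proof
        fix k assume k: "k \<in> ?P"
        have "(\<Sum>x\<in>?P. g x * A x k) = (\<Sum>nu\<in>?P. g (cnj nu) * real (emcoeff nu k))" by (rule reidx[symmetric])
        also have "\<dots> = (\<Sum>nu\<in>?P. G1 lam nu * real (emcoeff nu k)) - (\<Sum>nu\<in>?P. G2 lam nu * real (emcoeff nu k))"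
          by (simp add: g_def icc sum_subtractf left_diff_distrib)
        also have "\<dots> = 0" using that True k by (simp add: PRG_def)
        finally show "(\<Sum>x\<in>?P. g x * A x k) = 0" .
      qed
      then have "\<forall>x\<in>?P. g x = 0" using tri_unique[OF fin tri diag] by blast
      then have "g (cnj nu) = 0" using True img by blast
      then show ?thesis using True by (simp add: g_def icc)
    qed
  qed
  have "\<exists>!G. PRG n G" using exq uniq by blast
  then show ?thesis unfolding me_coeff_def PRG_def[symmetric] by (rule theI')
qed




definition comps :: "nat \<Rightarrow> nat list set" where
  "comps n = {w. 0 \<notin> set w \<and> sum_list w = n}"
definition sgnw :: "nat list \<Rightarrow> real" where
  "sgnw w = (-1) ^ (sum_list w - length w)"
fun Tq :: "real \<Rightarrow> nat list \<Rightarrow> real" where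
  "Tq q [] = 1"
| "Tq q (a # w) = Tq q w / (1 - q ^ (a + sum_list w))"
definition Rf :: "real \<Rightarrow> nat list \<Rightarrow> real" where
  "Rf q r = (\<Sum>w\<in>comps (sum_list r). real (emcoeff r w) * sgnw w * Tq q w)"
definition PiQ :: "real \<Rightarrow> nat list \<Rightarrow> real" where
  "PiQ q r = (\<Prod>i<length r. 1 / qpoch q (r ! i))"

lemma len_le_sum: "0 \<notin> set xs \<Longrightarrow> length xs \<le> sum_list (xs :: nat list)"
  by (induction xs) (auto simp: Suc_le_eq)

lemma comps_finite: "finite (comps n)"
proof -
  have "comps n \<subseteq> {xs. set xs \<subseteq> {..n} \<and> length xs \<le> n}"
  proof
    fix xs assume "xs \<in> comps n"
    then have "0 \<notin> set xs" "sum_list xs = n" by (auto simp: comps_def)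
    then show "xs \<in> {xs. set xs \<subseteq> {..n} \<and> length xs \<le> n}"
      using len_le_sum[of xs] member_le_sum_list[of _ xs] by auto
  qed
  then show ?thesis by (rule finite_subset) (rule finite_lists_length_le, simp)
qed

lemma comps_0: "comps 0 = {[]}"
  by (auto simp: comps_def sum_list_eq_0_iff) (metis list.set_intros(1) neq_Nil_conv)

lemma comps_pos: assumes "0 < n" shows "comps n = (\<Union>a\<in>{1..n}. Cons a ` comps (n - a))"
proof
  show "comps n \<subseteq> (\<Union>a\<in>{1..n}. Cons a ` comps (n - a))"
  proof
    fix w assume w: "w \<in> comps n"
    then have "w \<noteq> []" using assms by (auto simp: comps_def)
    then obtain a w' where aw: "w = a # w'" by (cases w) auto
    then have "a \<in> {1..n}" "w' \<in> comps (n - a)" using w by (auto simp: comps_def)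
    then show "w \<in> (\<Union>a\<in>{1..n}. Cons a ` comps (n - a))" using aw by blast
  qed
next
  show "(\<Union>a\<in>{1..n}. Cons a ` comps (n - a)) \<subseteq> comps n"
    by (auto simp: comps_def)
qed

lemma sgnw_Cons: assumes "0 < a" "0 \<notin> set w" shows "sgnw (a # w) = (-1) ^ (a - 1) * sgnw w"
proof -
  have "length w \<le> sum_list w" using len_le_sum[OF assms(2)] .
  then have "sum_list (a # w) - length (a # w) = (a - 1) + (sum_list w - length w)" using assms(1) by simp
  then show ?thesis by (simp add: sgnw_def power_add)
qed

lemma card_spos_le: "card (spos r) \<le> sum_list r"
proof -
  have "card (spos r) = (\<Sum>i\<in>spos r. 1)" by simp
  also have "\<dots> \<le> (\<Sum>i\<in>spos r. r ! i)" by (intro sum_mono) (auto simp: spos_def)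
  also have "\<dots> \<le> (\<Sum>i<length r. r ! i)" by (intro sum_mono2) (auto simp: spos_def)
  also have "\<dots> = sum_list r" by (simp add: sum_list_sum_nth lessThan_atLeast0)
  finally show ?thesis .
qed

lemma sum_spos: "(\<Sum>i\<in>spos r. r ! i) = sum_list r"
proof -
  have "(\<Sum>i\<in>spos r. r ! i) = (\<Sum>i<length r. r ! i)"
    by (intro sum.mono_neutral_left) (auto simp: spos_def)
  then show ?thesis by (simp add: sum_list_sum_nth lessThan_atLeast0)
qed

lemma sum_subS: assumes "S \<subseteq> spos r" shows "sum_list (subS r S) = sum_list r - card S"
proof -
  have S: "S \<subseteq> {..<length r}" using assms by (auto simp: spos_def)
  have "sum_list (subS r S) = (\<Sum>i<length r. r ! i - (if i \<in> S then 1 else 0))"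
    by (simp add: sum_list_sum_nth lessThan_atLeast0)
  also have "\<dots> = (\<Sum>i<length r. r ! i) - (\<Sum>i<length r. (if i \<in> S then 1 else 0))"
    by (rule sum_subtractf_nat) (use assms in \<open>auto simp: spos_def\<close>)
  also have "(\<Sum>i<length r. (if i \<in> S then 1 else 0)) = card S"
    using S by (simp add: sum.If_cases Int_absorb1)
  also have "(\<Sum>i<length r. r ! i) = sum_list r" by (simp add: sum_list_sum_nth lessThan_atLeast0)
  finally show ?thesis .
qed

lemma qpoch_nz: "0 < q \<Longrightarrow> q < 1 \<Longrightarrow> qpoch q k \<noteq> 0"
  using qpoch_pos by (metis less_irrefl)

lemma Pi_subS: assumes q: "0 < q" "q < 1" and S: "S \<subseteq> spos r"
  shows "PiQ q (subS r S) = PiQ q r * (\<Prod>i\<in>S. 1 - q ^ (r ! i))"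
proof -
  have S': "S \<subseteq> {..<length r}" using S by (auto simp: spos_def)
  have pt: "1 / qpoch q (r ! i - (if i \<in> S then 1 else 0)) = 1 / qpoch q (r ! i) * (if i \<in> S then 1 - q ^ (r ! i) else 1)"
    if "i < length r" for i
  proof (cases "i \<in> S")
    case True
    then have "0 < r ! i" using S by (auto simp: spos_def)
    then obtain m where m: "r ! i = Suc m" using not0_implies_Suc by blast
    have "1 - q ^ Suc m \<noteq> 0" using power_Suc_less_one[OF q, of m] by (simp del: power_Suc)
    then show ?thesis using True m qpoch_nz[OF q, of m] by (simp add: qpoch_Suc del: power_Suc)
  next
    case False then show ?thesis by simp
  qed
  have "PiQ q (subS r S) = (\<Prod>i<length r. 1 / qpoch q (r ! i) * (if i \<in> S then 1 - q ^ (r ! i) else 1))"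
    unfolding PiQ_def length_subS
  proof (intro prod.cong refl)
    fix i assume "i \<in> {..<length r}"
    then have i: "i < length r" by simp
    show "1 / qpoch q (subS r S ! i) = 1 / qpoch q (r ! i) * (if i \<in> S then 1 - q ^ (r ! i) else 1)"
      using pt[OF i] nth_subS[OF i] by simp
  qed
  also have "\<dots> = PiQ q r * (\<Prod>i<length r. (if i \<in> S then 1 - q ^ (r ! i) else 1))"
    unfolding PiQ_def by (rule prod.distrib)
  also have "(\<Prod>i<length r. (if i \<in> S then 1 - q ^ (r ! i) else 1)) = (\<Prod>i\<in>S. 1 - q ^ (r ! i))"
    using prod.inter_restrict[of "{..<length r}" "\<lambda>i. 1 - q ^ (r ! i)" S] S' by (simp add: Int_absorb1)
  finally show ?thesis .
qed

lemma alt_sum: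
  fixes c :: "nat \<Rightarrow> real"
  assumes "finite A"
  shows "(\<Sum>S\<in>Pow A - {{}}. (-1) ^ (card S - 1) * prod c S) = 1 - (\<Prod>i\<in>A. 1 - c i)"
proof -
  have "(\<Prod>i\<in>A. 1 - c i) = (\<Prod>i\<in>A. (- c i) + 1)" by simp
  also have "\<dots> = (\<Sum>X\<in>Pow A. prod (\<lambda>i. - c i) X * prod (\<lambda>i. 1) (A - X))"
    by (rule prod_add[OF assms])
  also have "\<dots> = (\<Sum>X\<in>Pow A. (-1) ^ card X * prod c X)"
  proof (intro sum.cong refl)
    fix X assume "X \<in> Pow A"
    have "prod (\<lambda>i. - c i) X = prod (\<lambda>i. (-1) * c i) X" by simp
    also have "\<dots> = (-1) ^ card X * prod c X" by (simp only: prod.distrib prod_constant)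
    finally show "prod (\<lambda>i. - c i) X * prod (\<lambda>i. 1) (A - X) = (-1) ^ card X * prod c X" by simp
  qed
  also have "\<dots> = 1 + (\<Sum>X\<in>Pow A - {{}}. (-1) ^ card X * prod c X)"
  proof -
    have "Pow A = insert {} (Pow A - {{}})" by auto
    then have "(\<Sum>X\<in>Pow A. (-1) ^ card X * prod c X) = (\<Sum>X\<in>insert {} (Pow A - {{}}). (-1) ^ card X * prod c X)"
      by simp
    also have "\<dots> = 1 + (\<Sum>X\<in>Pow A - {{}}. (-1) ^ card X * prod c X)"
      using assms by (subst sum.insert) auto
    finally show ?thesis .
  qed
  also have "(\<Sum>X\<in>Pow A - {{}}. (-1) ^ card X * prod c X) = - (\<Sum>S\<in>Pow A - {{}}. (-1) ^ (card S - 1) * prod c S)"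
  proof -
    have "(-1) ^ card X * prod c X = - ((-1) ^ (card X - 1) * prod c X)" if "X \<in> Pow A - {{}}" for X
    proof -
      have "finite X" using that assms finite_subset by auto
      then have "card X > 0" using that by (auto simp: card_gt_0_iff)
      then have "card X = Suc (card X - 1)" by simp
      then have "(-1::real) ^ card X = - ((-1) ^ (card X - 1))" by (metis mult_minus1 power_Suc)
      then show ?thesis by simp
    qed
    then show ?thesis by (simp add: sum_negf)
  qed
  finally show ?thesis by simp
qed

lemma Rf_eq: assumes q: "0 < q" "q < 1" shows "Rf q r = PiQ q r"
proof (induction "sum_list r" arbitrary: r rule: less_induct)
  case less
  define n where "n = sum_list r"
  show ?case
  proof (cases "n = 0")
    case True
    then have z: "\<forall>x\<in>set r. x = 0" by (simp add: n_def sum_list_eq_0_iff)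
    have "Rf q r = real (emcoeff r []) * sgnw [] * Tq q []" using True by (simp add: Rf_def n_def[symmetric] comps_0)
    also have "\<dots> = 1" using z by (simp add: emcoeff_Nil sgnw_def)
    also have "1 = PiQ q r" unfolding PiQ_def using z by (simp add: qpoch_def)
    finally show ?thesis .
  next
    case False
    then have n0: "0 < n" by simp
    have nq: "1 - q ^ n \<noteq> 0" using power_less_one_iff q n0
      by (metis diff_gt_0_iff_gt less_numeral_extra(3) not_gr0 power_strict_decreasing power_0 zero_less_one)
    define f where "f w = real (emcoeff r w) * sgnw w * Tq q w" for w
    have "Rf q r = (\<Sum>w\<in>(\<Union>a\<in>{1..n}. Cons a ` comps (n - a)). f w)"
      unfolding Rf_def f_def n_def[symmetric] comps_pos[OF n0] ..
    also have "\<dots> = (\<Sum>a\<in>{1..n}. (\<Sum>w\<in>Cons a ` comps (n - a). f w))"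
      by (rule sum.UNION_disjoint) (auto simp: comps_finite)
    also have "\<dots> = (\<Sum>a\<in>{1..n}. (-1) ^ (a - 1) / (1 - q ^ n) * (\<Sum>S\<in>Subs r a. PiQ q (subS r S)))"
    proof (intro sum.cong refl)
      fix a assume a: "a \<in> {1..n}"
      have "(\<Sum>w\<in>Cons a ` comps (n - a). f w) = (\<Sum>w'\<in>comps (n - a). f (a # w'))"
        by (simp add: sum.reindex)
      also have "\<dots> = (\<Sum>w'\<in>comps (n - a). (-1) ^ (a - 1) / (1 - q ^ n) *
          (\<Sum>S\<in>Subs r a. real (emcoeff (subS r S) w') * sgnw w' * Tq q w'))"
      proof (intro sum.cong refl)
        fix w' assume w': "w' \<in> comps (n - a)"
        then have w'p: "0 \<notin> set w'" "sum_list w' = n - a" by (auto simp: comps_def)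
        have "a + sum_list w' = n" using a w'p by simp
        then show "f (a # w') = (-1) ^ (a - 1) / (1 - q ^ n) *
          (\<Sum>S\<in>Subs r a. real (emcoeff (subS r S) w') * sgnw w' * Tq q w')"
          using a w'p unfolding f_def
          by (simp add: emcoeff_Cons sgnw_Cons sum_distrib_right sum_distrib_left mult_ac)
      qed
      also have "\<dots> = (-1) ^ (a - 1) / (1 - q ^ n) *
          (\<Sum>S\<in>Subs r a. \<Sum>w'\<in>comps (n - a). real (emcoeff (subS r S) w') * sgnw w' * Tq q w')"
        by (simp add: sum_distrib_left sum.swap[of _ "comps (n - a)"])
      also have "(\<Sum>S\<in>Subs r a. \<Sum>w'\<in>comps (n - a). real (emcoeff (subS r S) w') * sgnw w' * Tq q w') =
          (\<Sum>S\<in>Subs r a. PiQ q (subS r S))"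
      proof (intro sum.cong refl)
        fix S assume S: "S \<in> Subs r a"
        have sS: "sum_list (subS r S) = n - a" using S sum_subS by (auto simp: Subs_def n_def)
        have "(\<Sum>w'\<in>comps (n - a). real (emcoeff (subS r S) w') * sgnw w' * Tq q w') = Rf q (subS r S)"
          unfolding Rf_def sS ..
        also have "\<dots> = PiQ q (subS r S)"
          using less.hyps[of "subS r S"] sS a n_def by auto
        finally show "(\<Sum>w'\<in>comps (n - a). real (emcoeff (subS r S) w') * sgnw w' * Tq q w') = PiQ q (subS r S)" .
      qed
      finally show "(\<Sum>w\<in>Cons a ` comps (n - a). f w) = (-1) ^ (a - 1) / (1 - q ^ n) * (\<Sum>S\<in>Subs r a. PiQ q (subS r S))" .
    qed
    also have "\<dots> = 1 / (1 - q ^ n) * (\<Sum>a\<in>{1..n}. \<Sum>S\<in>Subs r a. (-1) ^ (card S - 1) * PiQ q (subS r S))"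
      by (simp add: sum_distrib_left Subs_def)
    also have "(\<Sum>a\<in>{1..n}. \<Sum>S\<in>Subs r a. (-1) ^ (card S - 1) * PiQ q (subS r S)) =
        (\<Sum>S\<in>(\<Union>a\<in>{1..n}. Subs r a). (-1) ^ (card S - 1) * PiQ q (subS r S))"
      by (rule sum.UNION_disjoint[symmetric]) (auto simp: finite_Subs Subs_def)
    also have "(\<Union>a\<in>{1..n}. Subs r a) = Pow (spos r) - {{}}"
    proof
      show "(\<Union>a\<in>{1..n}. Subs r a) \<subseteq> Pow (spos r) - {{}}" by (auto simp: Subs_def)
    next
      show "Pow (spos r) - {{}} \<subseteq> (\<Union>a\<in>{1..n}. Subs r a)"
      proof
        fix S assume S: "S \<in> Pow (spos r) - {{}}"
        then have "S \<subseteq> spos r" "S \<noteq> {}" by auto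
        then have "card S \<ge> 1" "card S \<le> card (spos r)"
          using finite_subset[OF _ finite_spos] card_mono[OF finite_spos]
          by (auto simp: Suc_le_eq card_gt_0_iff)
        then have "card S \<in> {1..n}" using card_spos_le[of r] n_def by auto
        then show "S \<in> (\<Union>a\<in>{1..n}. Subs r a)" using \<open>S \<subseteq> spos r\<close> by (auto simp: Subs_def)
      qed
    qed
    also have "(\<Sum>S\<in>Pow (spos r) - {{}}. (-1) ^ (card S - 1) * PiQ q (subS r S)) =
        PiQ q r * (\<Sum>S\<in>Pow (spos r) - {{}}. (-1) ^ (card S - 1) * (\<Prod>i\<in>S. 1 - q ^ (r ! i)))"
      by (simp add: sum_distrib_left Pi_subS[OF q] mult_ac)
    also have "(\<Sum>S\<in>Pow (spos r) - {{}}. (-1) ^ (card S - 1) * (\<Prod>i\<in>S. 1 - q ^ (r ! i))) =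
        1 - (\<Prod>i\<in>spos r. 1 - (1 - q ^ (r ! i)))"
      by (rule alt_sum) simp
    also have "(\<Prod>i\<in>spos r. 1 - (1 - q ^ (r ! i))) = q ^ n"
      by (simp add: power_sum[symmetric] sum_spos n_def)
    finally show ?thesis using nq by simp
  qed
qed





definition EE :: "nat list \<Rightarrow> (nat \<Rightarrow> nat) set" where
  "EE nu = {\<alpha>. finite {i. \<alpha> i \<noteq> 0} \<and> image_mset \<alpha> (mset_set {i. \<alpha> i \<noteq> 0}) = mset nu}"

lemma msym_q: "msym nu (\<lambda>i. q ^ i) = infsum (wt q) (EE nu)"
proof -
  have "(\<lambda>\<alpha>. \<Prod>i\<in>{i. \<alpha> i \<noteq> 0}. (q ^ i) ^ \<alpha> i) = wt q" by (rule ext) (simp add: wt_def)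
  then show ?thesis unfolding msym_def EE_def by simp
qed

lemma EE_sub: assumes "nu \<in> partitions k" shows "EE nu \<subseteq> DD k"
proof
  fix \<alpha> assume "\<alpha> \<in> EE nu"
  then have f: "finite {i. \<alpha> i \<noteq> 0}" and e: "image_mset \<alpha> (mset_set {i. \<alpha> i \<noteq> 0}) = mset nu"
    by (auto simp: EE_def)
  have "tot \<alpha> = sum_mset (image_mset \<alpha> (mset_set {i. \<alpha> i \<noteq> 0}))"
    unfolding tot_def by (rule sum_unfold_sum_mset)
  also have "\<dots> = sum_list nu" unfolding e by (rule sum_mset_sum_list)
  also have "\<dots> = k" using assms by (simp add: partitions_def)
  finally show "\<alpha> \<in> DD k" using f by (simp add: DD_def)
qed

lemma DD_Union: "DD k = (\<Union>nu\<in>partitions k. EE nu)"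
proof
  show "DD k \<subseteq> (\<Union>nu\<in>partitions k. EE nu)"
  proof
    fix \<alpha> assume a: "\<alpha> \<in> DD k"
    then have f: "finite {i. \<alpha> i \<noteq> 0}" and t: "tot \<alpha> = k" by (auto simp: DD_def)
    define M where "M = image_mset \<alpha> (mset_set {i. \<alpha> i \<noteq> 0})"
    define nu where "nu = rev (sorted_list_of_multiset M)"
    have m: "mset nu = M" by (simp add: nu_def)
    have "sorted (rev nu)" by (simp add: nu_def)
    moreover have "0 \<notin> set nu"
    proof
      assume "0 \<in> set nu"
      then have "0 \<in># M" using m by (metis set_mset_mset)
      then show False using f by (auto simp: M_def)
    qed
    moreover have "sum_list nu = k"
    proof -
      have "sum_list nu = sum_mset M" using m by (metis sum_mset_sum_list)
      also have "\<dots> = tot \<alpha>" unfolding M_def tot_def by (rule sum_unfold_sum_mset[symmetric])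
      finally show ?thesis using t by simp
    qed
    ultimately have "nu \<in> partitions k" by (simp add: partitions_def)
    moreover have "\<alpha> \<in> EE nu" using f m by (simp add: EE_def M_def)
    ultimately show "\<alpha> \<in> (\<Union>nu\<in>partitions k. EE nu)" by blast
  qed
next
  show "(\<Union>nu\<in>partitions k. EE nu) \<subseteq> DD k" using EE_sub by blast
qed

lemma hsym_q: assumes q: "0 < q" "q < 1" shows "hsym k (\<lambda>i. q ^ i) = 1 / qpoch q k"
proof -
  have "hsym k (\<lambda>i. q ^ i) = (\<Sum>nu\<in>partitions k. infsum (wt q) (EE nu))"
    by (simp add: hsym_def msym_q)
  also have "\<dots> = infsum (wt q) (\<Union>nu\<in>partitions k. EE nu)"
  proof (rule sum_infsum)
    show "finite (partitions k)" by (rule partitions_finite)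
    show "wt q summable_on EE nu" if "nu \<in> partitions k" for nu
      using summable_on_subset_banach[OF DD_summable[OF q] EE_sub[OF that]] .
    show "EE nu \<inter> EE nu' = {}" if "nu \<in> partitions k" "nu' \<in> partitions k" "nu \<noteq> nu'" for nu nu'
    proof (rule ccontr)
      assume "EE nu \<inter> EE nu' \<noteq> {}"
      then have "mset nu = mset nu'" by (auto simp: EE_def)
      then show False using partitions_mset_eq that by blast
    qed
  qed
  also have "\<dots> = infsum (wt q) (DD k)" by (simp only: DD_Union)
  also have "\<dots> = 1 / qpoch q k" by (rule DD_infsum[OF q])
  finally show ?thesis .
qed

lemma prod_list_nth: "(\<Prod>x\<leftarrow>xs. f x) = (\<Prod>i<length xs. f (xs ! i))"
proof (induction xs)
  case Nil then show ?case by simp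
next
  case (Cons a xs)
  have "(\<Prod>i<length (a # xs). f ((a # xs) ! i)) = f ((a # xs) ! 0) * (\<Prod>i<length xs. f ((a # xs) ! Suc i))"
    by (simp only: length_Cons prod.lessThan_Suc_shift)
  then show ?case using Cons by simp
qed

lemma hprod_q: assumes q: "0 < q" "q < 1" shows "hprod lam (\<lambda>i. q ^ i) = PiQ q lam"
  unfolding hprod_def PiQ_def prod_list_nth by (simp add: hsym_q[OF q])


definition FF :: "real \<Rightarrow> nat list \<Rightarrow> real" where
  "FF q nu = (\<Sum>w\<in>permutations_of_multiset (mset nu). sgnw w * Tq q w)"

lemma comps_Union: "comps m = (\<Union>nu\<in>partitions m. permutations_of_multiset (mset nu))"
proof
  show "comps m \<subseteq> (\<Union>nu\<in>partitions m. permutations_of_multiset (mset nu))"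
  proof
    fix w assume w: "w \<in> comps m"
    define nu where "nu = rev (sort w)"
    have m: "mset nu = mset w" by (simp add: nu_def)
    have "sum_list nu = sum_list w" by (metis m sum_mset_sum_list)
    moreover have "set nu = set w" by (simp add: nu_def)
    moreover have "sorted (rev nu)" by (simp add: nu_def)
    ultimately have "nu \<in> partitions m" using w by (simp add: partitions_def comps_def)
    moreover have "w \<in> permutations_of_multiset (mset nu)" using m by (simp add: permutations_of_multiset_def)
    ultimately show "w \<in> (\<Union>nu\<in>partitions m. permutations_of_multiset (mset nu))" by blast
  qed
next
  show "(\<Union>nu\<in>partitions m. permutations_of_multiset (mset nu)) \<subseteq> comps m"
  proof
    fix w assume "w \<in> (\<Union>nu\<in>partitions m. permutations_of_multiset (mset nu))"
    then obtain nu where nu: "nu \<in> partitions m" "mset w = mset nu" by (auto simp: permutations_of_multiset_def)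
    have "set w = set nu" using nu(2) by (metis set_mset_mset)
    moreover have "sum_list w = sum_list nu" using nu(2) by (metis sum_mset_sum_list)
    ultimately show "w \<in> comps m" using nu(1) by (simp add: partitions_def comps_def)
  qed
qed

lemma H_eq: assumes q: "0 < q" "q < 1" and lam: "lam \<in> partitions m"
  shows "PiQ q lam = (\<Sum>nu\<in>partitions m. real (emcoeff lam nu) * FF q nu)"
proof -
  have sl: "sum_list lam = m" using lam by (simp add: partitions_def)
  have "PiQ q lam = Rf q lam" by (rule Rf_eq[OF q, symmetric])
  also have "\<dots> = (\<Sum>w\<in>comps m. real (emcoeff lam w) * sgnw w * Tq q w)" by (simp add: Rf_def sl)
  also have "\<dots> = (\<Sum>nu\<in>partitions m. \<Sum>w\<in>permutations_of_multiset (mset nu). real (emcoeff lam w) * sgnw w * Tq q w)"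
    unfolding comps_Union
  proof (rule sum.UNION_disjoint)
    show "finite (partitions m)" by (rule partitions_finite)
    show "\<forall>nu\<in>partitions m. finite (permutations_of_multiset (mset nu))" by simp
    show "\<forall>nu\<in>partitions m. \<forall>nu'\<in>partitions m. nu \<noteq> nu' \<longrightarrow>
      permutations_of_multiset (mset nu) \<inter> permutations_of_multiset (mset nu') = {}"
      using partitions_mset_eq by (fastforce simp: permutations_of_multiset_def)
  qed
  also have "\<dots> = (\<Sum>nu\<in>partitions m. real (emcoeff lam nu) * FF q nu)"
  proof (intro sum.cong refl)
    fix nu assume "nu \<in> partitions m"
    have "(\<Sum>w\<in>permutations_of_multiset (mset nu). real (emcoeff lam w) * sgnw w * Tq q w) =
        (\<Sum>w\<in>permutations_of_multiset (mset nu). real (emcoeff lam nu) * (sgnw w * Tq q w))"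
    proof (intro sum.cong refl)
      fix w assume "w \<in> permutations_of_multiset (mset nu)"
      then have "mset w = mset nu" by (simp add: permutations_of_multiset_def)
      then have "emcoeff lam w = emcoeff lam nu" by (rule emcoeff_mset)
      then show "real (emcoeff lam w) * sgnw w * Tq q w = real (emcoeff lam nu) * (sgnw w * Tq q w)" by simp
    qed
    then show "(\<Sum>w\<in>permutations_of_multiset (mset nu). real (emcoeff lam w) * sgnw w * Tq q w) =
        real (emcoeff lam nu) * FF q nu"
      by (simp add: FF_def sum_distrib_left)
  qed
  finally show ?thesis .
qed

lemma forgotten_q: assumes q: "0 < q" "q < 1" and mu: "mu \<in> partitions m"
  shows "forgotten mu (\<lambda>i. q ^ i) = FF q mu"
proof -
  have sl: "sum_list mu = m" using mu by (simp add: partitions_def)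
  let ?P = "partitions m"
  have G: "PRG m (me_coeff m)" by (rule me_coeff_PRG)
  have "forgotten mu (\<lambda>i. q ^ i) = (\<Sum>lam\<in>?P. me_coeff m mu lam * PiQ q lam)"
    by (simp add: forgotten_def sl hprod_q[OF q])
  also have "\<dots> = (\<Sum>lam\<in>?P. me_coeff m mu lam * (\<Sum>nu\<in>?P. real (emcoeff lam nu) * FF q nu))"
    by (intro sum.cong refl) (simp add: H_eq[OF q])
  also have "\<dots> = (\<Sum>lam\<in>?P. \<Sum>nu\<in>?P. me_coeff m mu lam * real (emcoeff lam nu) * FF q nu)"
    by (simp add: sum_distrib_left mult.assoc)
  also have "\<dots> = (\<Sum>nu\<in>?P. \<Sum>lam\<in>?P. me_coeff m mu lam * real (emcoeff lam nu) * FF q nu)"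
    by (rule sum.swap)
  also have "\<dots> = (\<Sum>nu\<in>?P. (\<Sum>lam\<in>?P. me_coeff m mu lam * real (emcoeff lam nu)) * FF q nu)"
    by (simp add: sum_distrib_right)
  also have "\<dots> = (\<Sum>nu\<in>?P. (if mu = nu then 1 else 0) * FF q nu)"
    using G mu by (intro sum.cong refl) (simp add: PRG_def)
  also have "\<dots> = (\<Sum>nu\<in>?P. if nu = mu then FF q nu else 0)" by (intro sum.cong refl) auto
  also have "\<dots> = FF q mu" by (rule trans[OF sum.delta[OF partitions_finite]]) (use mu in simp)
  finally show ?thesis .
qed


fun suffs :: "nat list \<Rightarrow> nat set" where
  "suffs [] = {}"
| "suffs (a # w) = insert (a + sum_list w) (suffs w)"

lemma suffs_props: "0 \<notin> set w \<Longrightarrow> suffs w \<subseteq> {1..sum_list w} \<and> card (suffs w) = length w \<and> finite (suffs w)"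
proof (induction w)
  case Nil then show ?case by simp
next
  case (Cons a w)
  then have IH: "suffs w \<subseteq> {1..sum_list w}" "card (suffs w) = length w" "finite (suffs w)" by auto
  have "a > 0" using Cons.prems by auto
  then have "a + sum_list w \<notin> suffs w" using IH(1) by auto
  then show ?case using IH \<open>a > 0\<close> by auto
qed

lemma Tq_eq: assumes q: "0 < q" "q < 1" shows "0 \<notin> set w \<Longrightarrow> Tq q w = 1 / (\<Prod>u\<in>suffs w. 1 - q ^ u)"
proof (induction w)
  case Nil then show ?case by simp
next
  case (Cons a w)
  then have IH: "Tq q w = 1 / (\<Prod>u\<in>suffs w. 1 - q ^ u)" by auto
  have "a > 0" using Cons.prems by auto
  have sp: "suffs w \<subseteq> {1..sum_list w}" "finite (suffs w)" using suffs_props[of w] Cons.prems by auto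
  then have "a + sum_list w \<notin> suffs w" using \<open>a > 0\<close> by auto
  then show ?case using IH sp by (simp add: field_simps)
qed

definition qint :: "nat \<Rightarrow> real poly" where
  "qint i = (\<Sum>k<i. monom 1 k)"

definition PP :: "nat list \<Rightarrow> real poly" where
  "PP mu = (\<Sum>w\<in>permutations_of_multiset (mset mu). \<Prod>i\<in>{1..sum_list mu} - suffs w. qint i)"

lemma sum_Nats: "finite A \<Longrightarrow> (\<And>x. x \<in> A \<Longrightarrow> f x \<in> \<nat>) \<Longrightarrow> sum f A \<in> \<nat>"
  by (induction A rule: finite_induct) auto

lemma NP_sum: "finite A \<Longrightarrow> (\<And>x. x \<in> A \<Longrightarrow> \<forall>i. coeff (p x) i \<in> \<nat>) \<Longrightarrow> \<forall>i. coeff (\<Sum>x\<in>A. p x) i \<in> \<nat>"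
  by (simp add: coeff_sum sum_Nats)

lemma NP_mult: "\<forall>i. coeff p i \<in> \<nat> \<Longrightarrow> \<forall>i. coeff q i \<in> \<nat> \<Longrightarrow> \<forall>i. coeff (p * q) i \<in> (\<nat> :: real set)"
  by (simp add: coeff_mult sum_Nats)

lemma NP_prod: "finite A \<Longrightarrow> (\<And>x. x \<in> A \<Longrightarrow> \<forall>i. coeff (p x) i \<in> \<nat>) \<Longrightarrow> \<forall>i. coeff (\<Prod>x\<in>A. p x) i \<in> (\<nat> :: real set)"
proof (induction A rule: finite_induct)
  case empty then show ?case by (simp add: coeff_1)
next
  case (insert x A) then show ?case by (simp add: NP_mult)
qed

lemma NP_qint: "\<forall>n. coeff (qint i) n \<in> \<nat>"
  unfolding qint_def by (rule NP_sum) auto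

lemma NP_PP: "\<forall>i. coeff (PP mu) i \<in> \<nat>"
  unfolding PP_def by (intro NP_sum NP_prod NP_qint) auto

lemma poly_qint: "poly (qint i) q = (\<Sum>k<i. q ^ k)"
  by (simp add: qint_def poly_sum poly_monom)

lemma term_eq: assumes q: "0 < q" "q < 1" and w: "0 \<notin> set w" "sum_list w = m"
  shows "sgnw w * Tq q w * qpoch q m = (q - 1) ^ (m - length w) * (\<Prod>i\<in>{1..m} - suffs w. poly (qint i) q)"
proof -
  have sp: "suffs w \<subseteq> {1..m}" "card (suffs w) = length w" "finite (suffs w)"
    using suffs_props[OF w(1)] w(2) by auto
  have pos: "(\<Prod>u\<in>suffs w. 1 - q ^ u) > 0"
  proof (rule prod_pos)
    fix u assume "u \<in> suffs w"
    then have "u \<ge> 1" using sp by auto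
    then have "q ^ u < 1" using q by (simp add: power_less_one_iff)
    then show "0 < 1 - q ^ u" by simp
  qed
  have qp: "qpoch q m = (\<Prod>i\<in>{1..m} - suffs w. 1 - q ^ i) * (\<Prod>u\<in>suffs w. 1 - q ^ u)"
    unfolding qpoch_def by (rule prod.subset_diff[OF sp(1)]) simp
  have "Tq q w * qpoch q m = (\<Prod>i\<in>{1..m} - suffs w. 1 - q ^ i)"
    using pos by (simp add: Tq_eq[OF q w(1)] qp)
  also have "\<dots> = (\<Prod>i\<in>{1..m} - suffs w. (1 - q) * poly (qint i) q)"
    by (intro prod.cong refl) (simp add: poly_qint one_diff_power_eq)
  also have "\<dots> = (1 - q) ^ (m - length w) * (\<Prod>i\<in>{1..m} - suffs w. poly (qint i) q)"
  proof -
    have "card ({1..m} - suffs w) = m - length w" using sp by (simp add: card_Diff_subset)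
    then show ?thesis by (simp add: prod.distrib)
  qed
  finally have T: "Tq q w * qpoch q m = (1 - q) ^ (m - length w) * (\<Prod>i\<in>{1..m} - suffs w. poly (qint i) q)" .
  have "sgnw w = (-1) ^ (m - length w)" by (simp add: sgnw_def w(2))
  then have "sgnw w * Tq q w * qpoch q m = ((-1) ^ (m - length w) * (1 - q) ^ (m - length w)) * (\<Prod>i\<in>{1..m} - suffs w. poly (qint i) q)"
    using T by (simp add: mult.assoc)
  also have "(-1) ^ (m - length w) * (1 - q) ^ (m - length w) = (q - 1) ^ (m - length w)"
    by (simp add: power_mult_distrib[symmetric])
  finally show ?thesis .
qed

theorem proposition1p1:
  fixes m :: nat and mu :: "nat list"
  assumes "m \<ge> 1" and "mu \<in> partitions m"
  shows "\<exists>P :: real poly. (\<forall>i. coeff P i \<in> \<nat>) \<and>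
     (\<forall>q::real. 0 < q \<and> q < 1 \<longrightarrow>
        forgotten mu (\<lambda>i. q ^ i) * qpoch q m = poly P q * (q - 1) ^ (m - length mu))"
proof -
  have A: "\<forall>i. coeff (PP mu) i \<in> \<nat>" by (rule NP_PP)
  have B: "\<forall>q::real. 0 < q \<and> q < 1 \<longrightarrow>
        forgotten mu (\<lambda>i. q ^ i) * qpoch q m = poly (PP mu) q * (q - 1) ^ (m - length mu)"
  proof (intro allI impI)
  fix q :: real assume "0 < q \<and> q < 1"
  then have q: "0 < q" "q < 1" by auto
  have sl: "sum_list mu = m" "0 \<notin> set mu" using assms(2) by (auto simp: partitions_def)
  have "forgotten mu (\<lambda>i. q ^ i) * qpoch q m = (\<Sum>w\<in>permutations_of_multiset (mset mu). sgnw w * Tq q w * qpoch q m)"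
    by (simp add: forgotten_q[OF q assms(2)] FF_def sum_distrib_right)
  also have "\<dots> = (\<Sum>w\<in>permutations_of_multiset (mset mu). (q - 1) ^ (m - length mu) * (\<Prod>i\<in>{1..m} - suffs w. poly (qint i) q))"
  proof (intro sum.cong refl)
    fix w assume "w \<in> permutations_of_multiset (mset mu)"
    then have mw: "mset w = mset mu" by (simp add: permutations_of_multiset_def)
    have "0 \<notin> set w" using mw sl by (metis set_mset_mset)
    moreover have "sum_list w = m" using mw sl by (metis sum_mset_sum_list)
    moreover have "length w = length mu" using mw by (metis size_mset)
    ultimately show "sgnw w * Tq q w * qpoch q m = (q - 1) ^ (m - length mu) * (\<Prod>i\<in>{1..m} - suffs w. poly (qint i) q)"
      using term_eq[OF q] by metis
  qed
  also have "\<dots> = poly (PP mu) q * (q - 1) ^ (m - length mu)"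
    by (simp add: PP_def poly_sum poly_prod sl sum_distrib_left mult.commute)
  finally show "forgotten mu (\<lambda>i. q ^ i) * qpoch q m = poly (PP mu) q * (q - 1) ^ (m - length mu)" .
  qed
  show ?thesis using A B by blast
qed


end
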